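(* Let $\alpha=(\alpha_n)_{n\in\mathbb{N}}\in\ell^2$. The Rhaly operator $R_\alpha$ is bounded on $\ell^2$ if and only if the sequence $(\sigma_k)_{k\ge-1}$ is bounded. Moreover $$\frac{1}{\sqrt2}\sup_{h\ge-1}\sigma_h\le\|R_\alpha\|\le4\sqrt2\sup_{h\ge-1}\sigma_h.$$
   Context: $\mathbb{N}=\{0,1,2,\dots\}$; $\ell^2$ is the space of square-summable functions $\mathbb{N}\to\mathbb{C}$. The Rhaly operator is $(R_\alpha f)(k)=\alpha_k\sum_{j=0}^k f(j)$, with operator norm $\|R_\alpha\|=\sup_{\|f\|_2=1}\|R_\alpha f\|_2$ (possibly $+\infty$). Define $\sigma_{-1}=|\alpha_0|$ and, for $k\in\mathbb{N}$, $\sigma_k=\big(\sum_{j=2^k}^{2^{k+1}-1}(j+1)|\alpha_j|^2\big)^{1/2}$. *)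

theory Defs
  imports "HOL-Analysis.Analysis"
begin

definition is_l2 :: "(nat \<Rightarrow> complex) \<Rightarrow> bool" where
  "is_l2 f \<longleftrightarrow> summable (\<lambda>n. (norm (f n))^2)"

definition l2norm :: "(nat \<Rightarrow> complex) \<Rightarrow> real" where
  "l2norm f = sqrt (\<Sum>n. (norm (f n))^2)"

definition rhaly :: "(nat \<Rightarrow> complex) \<Rightarrow> (nat \<Rightarrow> complex) \<Rightarrow> nat \<Rightarrow> complex" where
  "rhaly \<alpha> f k = \<alpha> k * (\<Sum>j\<le>k. f j)"

definition rhaly_norm :: "(nat \<Rightarrow> complex) \<Rightarrow> ereal" where
  "rhaly_norm \<alpha> = (SUP f\<in>{f. is_l2 f \<and> l2norm f = 1}.
      (if is_l2 (rhaly \<alpha> f) then ereal (l2norm (rhaly \<alpha> f)) else \<infinity>))"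

definition sigma :: "(nat \<Rightarrow> complex) \<Rightarrow> int \<Rightarrow> real" where
  "sigma \<alpha> h = (if h = -1 then norm (\<alpha> 0)
     else sqrt (\<Sum>j\<in>{2^nat h..<2^(nat h + 1)}. real (j+1) * (norm (\<alpha> j))^2))"

end

theory Submission
  imports Defs
begin

lemma step_ineq:
  fixes n x y :: real assumes "n > 0"
  shows "(y/(n+1))^2 - 2*(y-x)*(y/(n+1)) \<le> x^2/n - y^2/(n+1)"
proof -
  define p where "p = x/n"
  define A where "A = y/(n+1)"
  have x: "x = n*p" using assms by (simp add: p_def)
  have y: "y = (n+1)*A" using assms by (simp add: A_def)
  have e1: "y/(n+1) = A" using assms by (simp add: A_def)
  have e2: "x^2/n = n*p^2" using assms by (simp add: x power2_eq_square)
  have e3: "y^2/(n+1) = (n+1)*A^2" using assms by (simp add: y power2_eq_square)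
  have "x^2/n - y^2/(n+1) - ((y/(n+1))^2 - 2*(y-x)*(y/(n+1))) = n*(p-A)^2"
    unfolding e1 e2 e3 by (simp add: x y algebra_simps power2_eq_square)
  moreover have "n*(p-A)^2 \<ge> 0" using assms by simp
  ultimately show ?thesis by linarith
qed

lemma hardy_core:
  fixes a :: "nat \<Rightarrow> real" assumes a: "\<And>i. 0 \<le> a i"
  shows "(\<Sum>i<N. a i * ((\<Sum>l<Suc i. a l) / real (Suc i))) \<le> 2 * (\<Sum>i<N. (a i)^2)"
proof -
  define Q where "Q i = (\<Sum>l<i. a l)" for i
  define A where "A i = Q (Suc i) / real (Suc i)" for i
  define F where "F i = (Q i)^2 / real i" for i
  have aQ: "a i = Q (Suc i) - Q i" for i by (simp add: Q_def)
  have st: "(A i)^2 - 2 * a i * A i \<le> F i - F (Suc i)" for i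
  proof (cases "i = 0")
    case True
    then show ?thesis by (simp add: A_def F_def Q_def power2_eq_square)
  next
    case False
    then have "real i > 0" by simp
    from step_ineq[OF this, of "Q (Suc i)" "Q i"] show ?thesis
      unfolding A_def F_def aQ by (simp add: add.commute)
  qed
  have "(\<Sum>i<N. (A i)^2 - 2 * a i * A i) \<le> (\<Sum>i<N. F i - F (Suc i))"
    by (rule sum_mono) (rule st)
  also have "\<dots> = F 0 - F N" by (rule sum_lessThan_telescope')
  also have "\<dots> \<le> 0" by (simp add: F_def)
  finally have 1: "(\<Sum>i<N. (A i)^2) \<le> 2 * (\<Sum>i<N. a i * A i)"
    by (simp add: sum_subtractf sum_distrib_left mult.assoc)
  have "a i * A i \<le> (a i)^2 + (A i)^2 / 4" for i
  proof -
    have "0 \<le> (a i - A i / 2)^2" by simp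
    then show ?thesis by (simp add: power2_eq_square algebra_simps)
  qed
  then have "(\<Sum>i<N. a i * A i) \<le> (\<Sum>i<N. (a i)^2 + (A i)^2 / 4)"
    by (rule sum_mono)
  also have "\<dots> = (\<Sum>i<N. (a i)^2) + (\<Sum>i<N. (A i)^2) / 4"
    by (simp add: sum.distrib sum_divide_distrib)
  finally have "(\<Sum>i<N. a i * A i) \<le> 2 * (\<Sum>i<N. (a i)^2)" using 1 by linarith
  then show ?thesis by (simp add: A_def Q_def)
qed

lemma swap_sum:
  fixes w d :: "nat \<Rightarrow> real"
  shows "(\<Sum>j<N. w j * (\<Sum>i<Suc j. d i)) = (\<Sum>i<N. d i * (\<Sum>j\<in>{i..<N}. w j))"
proof (induction N)
  case 0 then show ?case by simp
next
  case (Suc N)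
  have "(\<Sum>i<Suc N. d i * (\<Sum>j\<in>{i..<Suc N}. w j)) = (\<Sum>i<Suc N. d i * (\<Sum>j\<in>{i..<N}. w j) + d i * w N)"
    by (rule sum.cong) (auto simp: distrib_left)
  also have "\<dots> = (\<Sum>i<N. d i * (\<Sum>j\<in>{i..<N}. w j)) + w N * (\<Sum>i<Suc N. d i)"
  proof -
    have "(\<Sum>i<Suc N. d i * w N) = sum d {..<Suc N} * w N" by (rule sum_distrib_right[symmetric])
    then show ?thesis by (simp add: sum.distrib mult.commute)
  qed
  finally show ?case using Suc by simp
qed

lemma weighted_hardy:
  fixes a w :: "nat \<Rightarrow> real" assumes a: "\<And>i. 0 \<le> a i" and w: "\<And>j. 0 \<le> w j"
    and tail: "\<And>n. (\<Sum>j\<in>{n..<N}. w j) \<le> K / real (Suc n)"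
  shows "(\<Sum>j<N. w j * (\<Sum>l<Suc j. a l)^2) \<le> 4 * K * (\<Sum>i<N. (a i)^2)"
proof -
  define Q where "Q i = (\<Sum>l<i. a l)" for i
  define d where "d i = (Q (Suc i))^2 - (Q i)^2" for i
  have K: "K \<ge> 0" using tail[of N] by (simp add: divide_nonneg_pos zero_le_divide_iff)
  have Qn: "Q i \<ge> 0" for i unfolding Q_def by (simp add: a sum_nonneg)
  have QS: "Q (Suc i) = Q i + a i" for i by (simp add: Q_def)
  have d0: "0 \<le> d i" for i unfolding d_def QS using a[of i] Qn[of i]
    by (simp add: power2_eq_square algebra_simps)
  have d1: "d i \<le> 2 * a i * Q (Suc i)" for i unfolding d_def QS using a[of i] Qn[of i]
    by (simp add: power2_eq_square algebra_simps)
  have tel: "(Q (Suc j))^2 = (\<Sum>i<Suc j. d i)" for j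
  proof -
    have "(\<Sum>i<Suc j. d i) = (Q (Suc j))^2 - (Q 0)^2" unfolding d_def by (rule sum_lessThan_telescope)
    then show ?thesis by (simp add: Q_def)
  qed
  have "(\<Sum>j<N. w j * (\<Sum>l<Suc j. a l)^2) = (\<Sum>j<N. w j * (\<Sum>i<Suc j. d i))"
    using tel by (simp add: Q_def)
  also have "\<dots> = (\<Sum>i<N. d i * (\<Sum>j\<in>{i..<N}. w j))" by (rule swap_sum)
  also have "\<dots> \<le> (\<Sum>i<N. (2 * a i * Q (Suc i)) * (K / real (Suc i)))"
    by (rule sum_mono, rule mult_mono) (use tail in \<open>auto simp: d0 d1 K w sum_nonneg a Qn\<close>)
  also have "\<dots> = 2 * K * (\<Sum>i<N. a i * ((\<Sum>l<Suc i. a l) / real (Suc i)))"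
    unfolding sum_distrib_left by (rule sum.cong) (simp_all add: Q_def)
  also have "\<dots> \<le> 2 * K * (2 * (\<Sum>i<N. (a i)^2))"
    by (rule mult_left_mono[OF hardy_core[OF a]]) (simp add: K)
  finally show ?thesis by simp
qed

lemma block_bound:
  assumes S: "\<And>h. h \<ge> -1 \<Longrightarrow> sigma \<alpha> h \<le> M"
  shows "(\<Sum>j\<in>{2^m..<2^(m+1)}. (cmod (\<alpha> j))^2) \<le> M^2 / 2^m"
proof -
  have "sigma \<alpha> (int m) \<le> M" using S[of "int m"] by simp
  then have "sqrt (\<Sum>j\<in>{2^m..<2^(m+1)}. real (j+1) * (cmod (\<alpha> j))^2) \<le> M"
    by (simp add: sigma_def)
  then have 1: "(\<Sum>j\<in>{2^m..<2^(m+1)}. real (j+1) * (cmod (\<alpha> j))^2) \<le> M^2"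
    by (rule sqrt_le_D)
  have "(2::real)^m * (\<Sum>j\<in>{2^m..<2^(m+1)}. (cmod (\<alpha> j))^2)
      = (\<Sum>j\<in>{2^m..<2^(m+1)}. 2^m * (cmod (\<alpha> j))^2)" by (simp add: sum_distrib_left)
  also have "\<dots> \<le> (\<Sum>j\<in>{2^m..<2^(m+1)}. real (j+1) * (cmod (\<alpha> j))^2)"
  proof (rule sum_mono)
    fix j assume "j \<in> {2^m..<(2::nat)^(m+1)}"
    then have "(2::real)^m \<le> real (j+1)"
      by (metis atLeastLessThan_iff le_SucI of_nat_le_iff of_nat_numeral of_nat_power Suc_eq_plus1)
    then show "2^m * (cmod (\<alpha> j))^2 \<le> real (j+1) * (cmod (\<alpha> j))^2"
      by (rule mult_right_mono) simp
  qed
  finally show ?thesis using 1 by (simp add: field_simps)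
qed

lemma dyadic_tail:
  assumes S: "\<And>h. h \<ge> -1 \<Longrightarrow> sigma \<alpha> h \<le> M"
  shows "(\<Sum>j\<in>{2^k..<2^(k+d)}. (cmod (\<alpha> j))^2) \<le> 2*M^2*(1/2^k - 1/2^(k+d))"
proof (induction d)
  case 0 then show ?case by simp
next
  case (Suc d)
  have sp: "{2^k..<2^(k+Suc d)} = {2^k..<2^(k+d)} \<union> {2^(k+d)..<(2::nat)^(k+d+1)}"
    by (auto simp: ivl_disj_un)
  have "(\<Sum>j\<in>{2^k..<2^(k+Suc d)}. (cmod (\<alpha> j))^2)
       = (\<Sum>j\<in>{2^k..<2^(k+d)}. (cmod (\<alpha> j))^2) + (\<Sum>j\<in>{2^(k+d)..<2^(k+d+1)}. (cmod (\<alpha> j))^2)"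
    unfolding sp by (rule sum.union_disjoint) auto
  also have "\<dots> \<le> 2*M^2*(1/2^k - 1/2^(k+d)) + M^2 / 2^(k+d)"
    using Suc block_bound[OF S, of "k+d"] by linarith
  also have "\<dots> = 2*M^2*(1/2^k - 1/2^(k+Suc d))" by (simp add: field_simps)
  finally show ?case .
qed

lemma tail_bound:
  assumes S: "\<And>h. h \<ge> -1 \<Longrightarrow> sigma \<alpha> h \<le> M"
  shows "(\<Sum>j\<in>{n..<N}. (cmod (\<alpha> j))^2) \<le> 4*M^2 / real (Suc n)"
proof -
  have a0: "cmod (\<alpha> 0) \<le> M" using S[of "-1"] by (simp add: sigma_def)
  then have M0: "M \<ge> 0" using norm_ge_zero order_trans by blast
  have N2: "N < 2^N" by (rule less_exp)
  show ?thesis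
  proof (cases "n = 0")
    case True
    have "(\<Sum>j\<in>{0..<N}. (cmod (\<alpha> j))^2) \<le> (\<Sum>j\<in>{0..<2^N}. (cmod (\<alpha> j))^2)"
      by (rule sum_mono2) (use N2 in auto)
    also have "\<dots> = (cmod (\<alpha> 0))^2 + (\<Sum>j\<in>{2^0..<2^(0+N)}. (cmod (\<alpha> j))^2)"
      by (simp add: sum.atLeast_Suc_lessThan)
    also have "\<dots> \<le> M^2 + 2*M^2*(1/2^0 - 1/2^(0+N))"
      using dyadic_tail[OF S, of 0 N] power_mono[OF a0, of 2] by simp
    also have "\<dots> \<le> 4*M^2" by (simp add: field_simps)
    finally show ?thesis using True by simp
  next
    case False
    then obtain k where k: "2^k \<le> n" "n < 2^(k+1)" using ex_power_ivl1[of 2 n] by auto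
    have "(\<Sum>j\<in>{n..<N}. (cmod (\<alpha> j))^2) \<le> (\<Sum>j\<in>{2^k..<2^(k+N)}. (cmod (\<alpha> j))^2)"
    proof (rule sum_mono2)
      show "{n..<N} \<subseteq> {2^k..<2^(k+N)}"
      proof
        fix j assume "j \<in> {n..<N}"
        moreover have "N \<le> 2^(k+N)"
        proof -
          have "(2::nat)^N \<le> 2^(k+N)" by (rule power_increasing) auto
          then show ?thesis using N2 by linarith
        qed
        ultimately show "j \<in> {2^k..<2^(k+N)}" using k by auto
      qed
    qed auto
    also have "\<dots> \<le> 2*M^2*(1/2^k - 1/2^(k+N))" by (rule dyadic_tail[OF S])
    also have "\<dots> \<le> 2*M^2 / 2^k" by (simp add: field_simps M0)
    also have "\<dots> = 4*M^2 / 2^(k+1)" by simp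
    also have "\<dots> \<le> 4*M^2 / real (Suc n)"
    proof (rule divide_left_mono)
      have "Suc n \<le> 2^(k+1)" using k by simp
      then show "real (Suc n) \<le> 2^(k+1)"
        by (metis of_nat_le_iff of_nat_numeral of_nat_power)
    qed (auto simp: M0)
    finally show ?thesis .
  qed
qed

lemma upper_one:
  assumes S: "\<And>h. h \<ge> -1 \<Longrightarrow> sigma \<alpha> h \<le> M"
    and f: "is_l2 f" "l2norm f = 1"
  shows "is_l2 (rhaly \<alpha> f) \<and> l2norm (rhaly \<alpha> f) \<le> 4*M"
proof -
  have "cmod (\<alpha> 0) \<le> M" using S[of "-1"] by (simp add: sigma_def)
  then have M0: "M \<ge> 0" using norm_ge_zero[of "\<alpha> 0"] by linarith
  have sf: "summable (\<lambda>n. (cmod (f n))^2)" using f(1) by (simp add: is_l2_def)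
  have s1: "(\<Sum>n. (cmod (f n))^2) = 1" using f(2) by (simp add: l2norm_def)
  have pb: "(\<Sum>k<N. (cmod (rhaly \<alpha> f k))^2) \<le> 16*M^2" for N
  proof -
    have "(\<Sum>k<N. (cmod (rhaly \<alpha> f k))^2) \<le> (\<Sum>k<N. (cmod (\<alpha> k))^2 * (\<Sum>l<Suc k. cmod (f l))^2)"
    proof (rule sum_mono)
      fix k
      have "cmod (\<Sum>j\<le>k. f j) \<le> (\<Sum>j\<le>k. cmod (f j))" by (rule norm_sum)
      then have "(cmod (\<Sum>j\<le>k. f j))^2 \<le> (\<Sum>l<Suc k. cmod (f l))^2"
        by (simp add: lessThan_Suc_atMost power_mono)
      then show "(cmod (rhaly \<alpha> f k))^2 \<le> (cmod (\<alpha> k))^2 * (\<Sum>l<Suc k. cmod (f l))^2"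
        by (simp add: rhaly_def norm_mult power_mult_distrib mult_left_mono)
    qed
    also have "\<dots> \<le> 4 * (4*M^2) * (\<Sum>i<N. (cmod (f i))^2)"
      by (rule weighted_hardy[where w="\<lambda>k. (cmod (\<alpha> k))^2" and a="\<lambda>l. cmod (f l)" and K="4*M^2"])
         (simp, simp, rule tail_bound[OF S])
    also have "\<dots> \<le> 4 * (4*M^2) * 1"
    proof (rule mult_left_mono)
      show "(\<Sum>i<N. (cmod (f i))^2) \<le> 1" unfolding s1[symmetric]
        by (rule sum_le_suminf[OF sf]) auto
    qed simp
    finally show ?thesis by simp
  qed
  have sR: "summable (\<lambda>n. (cmod (rhaly \<alpha> f n))^2)"
    by (rule summableI_nonneg_bounded[OF _ pb]) simp
  have "(\<Sum>n. (cmod (rhaly \<alpha> f n))^2) \<le> 16*M^2"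
    by (rule suminf_le_const[OF sR pb])
  then have "l2norm (rhaly \<alpha> f) \<le> sqrt (16*M^2)"
    unfolding l2norm_def by (rule real_sqrt_le_mono)
  also have "sqrt (16*M^2) = 4*M" using M0 by (simp add: real_sqrt_mult)
  finally show ?thesis using sR by (simp add: is_l2_def)
qed

lemma norm_ge_witness:
  assumes "is_l2 f" "l2norm f = 1" "is_l2 (rhaly \<alpha> f) \<Longrightarrow> c \<le> l2norm (rhaly \<alpha> f)"
  shows "ereal c \<le> rhaly_norm \<alpha>"
  unfolding rhaly_norm_def
  by (rule SUP_upper2[of f]) (use assms in auto)

lemma lower_m1: "ereal (sigma \<alpha> (-1) / sqrt 2) \<le> rhaly_norm \<alpha>"
proof -
  define f :: "nat \<Rightarrow> complex" where "f i = (if i = 0 then 1 else 0)" for i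
  have z: "(\<lambda>n. (cmod (f n))^2) n = 0" if "n \<notin> {0}" for n using that by (simp add: f_def)
  have "is_l2 f" unfolding is_l2_def by (rule summable_finite[of "{0}"]) (auto simp: f_def)
  moreover have "l2norm f = 1" unfolding l2norm_def
    by (subst suminf_finite[of "{0}"]) (auto simp: f_def)
  moreover have "sigma \<alpha> (-1) / sqrt 2 \<le> l2norm (rhaly \<alpha> f)" if "is_l2 (rhaly \<alpha> f)"
  proof -
    have R: "rhaly \<alpha> f = \<alpha>"
    proof
      fix k
      have "(\<Sum>j\<le>k. f j) = 1" by (simp add: f_def)
      then show "rhaly \<alpha> f k = \<alpha> k" by (simp add: rhaly_def)
    qed
    have "(\<Sum>j\<in>{0}. (cmod (\<alpha> j))^2) \<le> (\<Sum>n. (cmod (\<alpha> n))^2)"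
      by (rule sum_le_suminf) (use that R in \<open>auto simp: is_l2_def\<close>)
    then have "sqrt ((cmod (\<alpha> 0))^2) \<le> l2norm (rhaly \<alpha> f)"
      unfolding R l2norm_def by (simp add: real_sqrt_le_mono del: real_sqrt_abs)
    then have "cmod (\<alpha> 0) \<le> l2norm (rhaly \<alpha> f)" by simp
    moreover have "cmod (\<alpha> 0) / sqrt 2 \<le> cmod (\<alpha> 0)"
      by (simp add: divide_le_eq mult_le_cancel_left1 real_le_rsqrt)
    ultimately show ?thesis by (simp add: sigma_def)
  qed
  ultimately show ?thesis by (rule norm_ge_witness)
qed

lemma lower_nat: "ereal (sigma \<alpha> (int m) / sqrt 2) \<le> rhaly_norm \<alpha>"
proof -
  define P :: nat where "P = 2^m"
  define c :: real where "c = 1 / sqrt (real P)"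
  define f :: "nat \<Rightarrow> complex" where "f i = (if i < P then complex_of_real c else 0)" for i
  have P0: "real P > 0" by (simp add: P_def)
  have c2: "c^2 = 1 / real P" using P0 by (simp add: c_def power_divide)
  have fin: "finite {..<P}" by simp
  have "is_l2 f" unfolding is_l2_def by (rule summable_finite[of "{..<P}"]) (auto simp: f_def)
  moreover have "l2norm f = 1" unfolding l2norm_def
    by (subst suminf_finite[of "{..<P}"]) (use P0 in \<open>auto simp: f_def c2\<close>)
  moreover have "sigma \<alpha> (int m) / sqrt 2 \<le> l2norm (rhaly \<alpha> f)" if "is_l2 (rhaly \<alpha> f)"
  proof -
    have Rj: "(cmod (rhaly \<alpha> f j))^2 = real P * (cmod (\<alpha> j))^2" if "j \<ge> P" for j
    proof -
      have "(\<Sum>i\<le>j. f i) = (\<Sum>i\<in>{..<P}. complex_of_real c)"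
        unfolding f_def by (rule sum.mono_neutral_cong_right) (use that in auto)
      then have "(\<Sum>i\<le>j. f i) = complex_of_real (real P * c)" by simp
      then have "(cmod (rhaly \<alpha> f j))^2 = (cmod (\<alpha> j))^2 * (real P * c)^2"
        by (simp add: rhaly_def norm_mult power_mult_distrib abs_mult)
      also have "\<dots> = real P * (cmod (\<alpha> j))^2" using P0
      proof -
        have "(real P * c)^2 = real P * (real P * c^2)" by (simp add: power2_eq_square)
        also have "\<dots> = real P" using P0 by (simp add: c2)
        finally have "(real P * c)^2 = real P" .
        then show ?thesis by simp
      qed
      finally show ?thesis .
    qed
    have "(\<Sum>j\<in>{2^m..<2^(m+1)}. real (j+1) * (cmod (\<alpha> j))^2) / 2
        \<le> (\<Sum>j\<in>{2^m..<2^(m+1)}. real P * (cmod (\<alpha> j))^2)"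
      unfolding sum_divide_distrib
    proof (rule sum_mono)
      fix j assume "j \<in> {2^m..<(2::nat)^(m+1)}"
      then have "j + 1 \<le> 2 * P" by (simp add: P_def)
      then have "real (j+1) \<le> 2 * real P" by linarith
      then have "real (j+1) * (cmod (\<alpha> j))^2 \<le> (2 * real P) * (cmod (\<alpha> j))^2"
        by (rule mult_right_mono) simp
      then show "real (j+1) * (cmod (\<alpha> j))^2 / 2 \<le> real P * (cmod (\<alpha> j))^2"
        by simp
    qed
    also have "\<dots> = (\<Sum>j\<in>{2^m..<2^(m+1)}. (cmod (rhaly \<alpha> f j))^2)"
      by (rule sum.cong) (auto simp: Rj P_def)
    also have "\<dots> \<le> (\<Sum>n. (cmod (rhaly \<alpha> f n))^2)"
      by (rule sum_le_suminf) (use that in \<open>auto simp: is_l2_def\<close>)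
    finally have "sqrt ((\<Sum>j\<in>{2^m..<2^(m+1)}. real (j+1) * (cmod (\<alpha> j))^2) / 2) \<le> l2norm (rhaly \<alpha> f)"
      unfolding l2norm_def by (rule real_sqrt_le_mono)
    then show ?thesis by (simp add: sigma_def real_sqrt_divide)
  qed
  ultimately show ?thesis by (rule norm_ge_witness)
qed

lemma lower_all: "h \<ge> -1 \<Longrightarrow> ereal (sigma \<alpha> h / sqrt 2) \<le> rhaly_norm \<alpha>"
proof -
  assume "h \<ge> -1"
  then have "h = -1 \<or> h = int (nat h)" by linarith
  then show ?thesis using lower_m1[of \<alpha>] lower_nat[of \<alpha> "nat h"] by auto
qed

lemma upper_all:
  assumes S: "\<And>h. h \<ge> -1 \<Longrightarrow> sigma \<alpha> h \<le> M"
  shows "rhaly_norm \<alpha> \<le> ereal (4 * M)"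
  unfolding rhaly_norm_def
proof (rule SUP_least)
  fix f assume "f \<in> {f. is_l2 f \<and> l2norm f = 1}"
  then have "is_l2 (rhaly \<alpha> f) \<and> l2norm (rhaly \<alpha> f) \<le> 4*M"
    using upper_one[OF S] by auto
  then show "(if is_l2 (rhaly \<alpha> f) then ereal (l2norm (rhaly \<alpha> f)) else \<infinity>) \<le> ereal (4 * M)"
    by simp
qed

theorem theorem2p4:
  fixes \<alpha> :: "nat \<Rightarrow> complex"
  assumes "is_l2 \<alpha>"
  shows "(rhaly_norm \<alpha> < \<infinity> \<longleftrightarrow> bdd_above (sigma \<alpha> ` {-1..}))
    \<and> ereal (1 / sqrt 2) * (SUP h\<in>{-1..}. ereal (sigma \<alpha> h)) \<le> rhaly_norm \<alpha>
    \<and> rhaly_norm \<alpha> \<le> ereal (4 * sqrt 2) * (SUP h\<in>{-1..}. ereal (sigma \<alpha> h))"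
proof -
  define S where "S = (SUP h\<in>{-1..}. ereal (sigma \<alpha> h))"
  define R where "R = rhaly_norm \<alpha>"
  have sig0: "sigma \<alpha> h \<ge> 0" for h by (simp add: sigma_def sum_nonneg)
  have Sb: "ereal (sigma \<alpha> h) \<le> S" if "h \<ge> -1" for h
    unfolding S_def by (rule SUP_upper) (use that in auto)
  have e0: "ereal 0 \<le> ereal (sigma \<alpha> (-1))" using sig0 by simp
  have S0: "S \<ge> 0" using order_trans[OF e0 Sb[of "-1"]] by (simp add: zero_ereal_def)
  have low: "ereal (sigma \<alpha> h / sqrt 2) \<le> R" if "h \<ge> -1" for h
    unfolding R_def by (rule lower_all[OF that])
  have e1: "ereal 0 \<le> ereal (sigma \<alpha> (-1) / sqrt 2)" using sig0 by simp
  have R0: "R \<ge> 0" using order_trans[OF e1 low[of "-1"]] by (simp add: zero_ereal_def)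
  have lowS: "ereal (1 / sqrt 2) * S \<le> R"
  proof -
    have "ereal (1 / sqrt 2) * S = (SUP h\<in>{-1..}. ereal (1 / sqrt 2) * ereal (sigma \<alpha> h))"
      unfolding S_def by (rule SUP_ereal_mult_left[symmetric]) (auto simp: sig0)
    also have "\<dots> \<le> R"
      by (rule SUP_least) (use low in auto)
    finally show ?thesis .
  qed
  show ?thesis
  proof (cases S)
    case (real s)
    have sb: "sigma \<alpha> h \<le> s" if "h \<ge> -1" for h using Sb[OF that] real by simp
    have s0: "s \<ge> 0" using S0 real by simp
    have bdd: "bdd_above (sigma \<alpha> ` {-1..})" using sb by (auto intro!: bdd_aboveI)
    have Ru: "R \<le> ereal (4 * s)" unfolding R_def by (rule upper_all) (rule sb)
    have "4 * s \<le> 4 * sqrt 2 * s" using s0 by (simp add: mult_right_mono)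
    then have "R \<le> ereal (4 * sqrt 2) * S" using Ru real by (simp add: order_trans)
    then show ?thesis using lowS Ru bdd by (auto simp: R_def S_def)
  next
    case PInf
    have nb: "\<not> bdd_above (sigma \<alpha> ` {-1..})"
    proof
      assume "bdd_above (sigma \<alpha> ` {-1..})"
      then obtain M where "\<And>h. h \<ge> -1 \<Longrightarrow> sigma \<alpha> h \<le> M" by (auto simp: bdd_above_def)
      then have "S \<le> ereal M" unfolding S_def by (intro SUP_least) auto
      then show False using PInf by simp
    qed
    have RI: "R = \<infinity>"
    proof (rule ccontr)
      assume "R \<noteq> \<infinity>"
      then obtain r where r: "R = ereal r" using R0 by (cases R) auto
      have "sigma \<alpha> h \<le> sqrt 2 * r" if "h \<ge> -1" for h
      proof -
        have "sigma \<alpha> h / sqrt 2 \<le> r" using low[OF that] r by simp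
        then show ?thesis by (simp add: divide_le_eq mult.commute)
      qed
      then have "bdd_above (sigma \<alpha> ` {-1..})" by (auto intro!: bdd_aboveI)
      then show False using nb by simp
    qed
    show ?thesis using nb RI PInf by (simp add: R_def S_def)
  next
    case MInf
    then show ?thesis using S0 by simp
  qed
qed

end
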